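(* There are infinitely many graphs $G$, each of which is a one-point union of regular graphs, such that $\chi_{la}(G)=2$.
   Context: A one-point union of graphs $H_1,\dots,H_r$ ($r\ge 2$) is the graph obtained from their disjoint union by choosing one vertex in each $H_i$ and identifying these $r$ vertices into a single vertex. For a connected graph $G=(V,E)$ with $q=|E|$, a local antimagic labeling is a bijection $f:E\to\{1,\dots,q\}$ such that adjacent vertices $x,y$ satisfy $f^+(x)\ne f^+(y)$, where $f^+(x)=\sum f(e)$ over edges $e$ incident to $x$; $\chi_{la}(G)$ is the minimum number of distinct values of $f^+$ over all local antimagic labelings of $G$. *)

theory Defs
  imports Main
begin

definition simple_graph :: "'a set \<Rightarrow> 'a set set \<Rightarrow> bool" where
  "simple_graph V E \<longleftrightarrow> finite V \<and> (\<forall>e\<in>E. \<exists>x y. x \<noteq> y \<and> x \<in> V \<and> y \<in> V \<and> e = {x, y})"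

definition connected_graph :: "'a set \<Rightarrow> 'a set set \<Rightarrow> bool" where
  "connected_graph V E \<longleftrightarrow> V \<noteq> {} \<and>
     (\<forall>x\<in>V. \<forall>y\<in>V. (\<lambda>a b. {a, b} \<in> E)\<^sup>*\<^sup>* x y)"

definition degree :: "'a set set \<Rightarrow> 'a \<Rightarrow> nat" where
  "degree E x = card {e \<in> E. x \<in> e}"

definition regular_graph :: "'a set \<Rightarrow> 'a set set \<Rightarrow> bool" where
  "regular_graph V E \<longleftrightarrow> simple_graph V E \<and> (\<exists>k. \<forall>x\<in>V. degree E x = k)"

text \<open>This is exactly (up to renaming of vertices) the graph obtained from the disjoint union by
  identifying one chosen vertex of each H_i.\<close>
definition one_point_union_of_regular :: "'a set \<Rightarrow> 'a set set \<Rightarrow> bool" where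
  "one_point_union_of_regular V E \<longleftrightarrow>
     (\<exists>r::nat. \<exists>HV :: nat \<Rightarrow> 'a set. \<exists>HE :: nat \<Rightarrow> 'a set set. \<exists>v.
        r \<ge> 2 \<and>
        (\<forall>i<r. regular_graph (HV i) (HE i) \<and> HE i \<noteq> {} \<and> v \<in> HV i) \<and>
        (\<forall>i<r. \<forall>j<r. i \<noteq> j \<longrightarrow> HV i \<inter> HV j = {v}) \<and>
        V = (\<Union>i<r. HV i) \<and> E = (\<Union>i<r. HE i))"

definition vsum :: "('a set \<Rightarrow> nat) \<Rightarrow> 'a set set \<Rightarrow> 'a \<Rightarrow> nat" where
  "vsum f E x = (\<Sum>e\<in>{e \<in> E. x \<in> e}. f e)"

definition local_antimagic_labeling :: "'a set \<Rightarrow> 'a set set \<Rightarrow> ('a set \<Rightarrow> nat) \<Rightarrow> bool" where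
  "local_antimagic_labeling V E f \<longleftrightarrow>
     bij_betw f E {1..card E} \<and>
     (\<forall>x\<in>V. \<forall>y\<in>V. {x, y} \<in> E \<longrightarrow> vsum f E x \<noteq> vsum f E y)"

definition chi_la :: "'a set \<Rightarrow> 'a set set \<Rightarrow> nat" where
  "chi_la V E = Inf {card (vsum f E ` V) | f. local_antimagic_labeling V E f}"

end

theory Submission
  imports Defs
begin


definition LL :: "nat \<Rightarrow> nat \<Rightarrow> nat" where
  "LL n i = (if i < n then 4*n+2 else 2*n)"
definition MM :: "nat \<Rightarrow> nat" where "MM n = 4*n+3"
definition ww :: "nat \<Rightarrow> nat \<Rightarrow> nat \<Rightarrow> nat" where
  "ww n i j = (if j = 0 \<or> LL n i \<le> j then 0 else (i+1) * MM n + j)"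
definition ed :: "nat \<Rightarrow> nat \<Rightarrow> nat \<Rightarrow> nat set" where
  "ed n i j = {ww n i j, ww n i (Suc j)}"
definition II :: "nat \<Rightarrow> (nat \<times> nat) set" where
  "II n = {(i,j). i < Suc n \<and> j < LL n i}"

lemma LL_bounds: "n \<ge> 2 \<Longrightarrow> 4 \<le> LL n i \<and> LL n i < MM n \<and> even (LL n i)"
  by (auto simp: LL_def MM_def)

lemma ww_zero: "ww n i j = 0 \<longleftrightarrow> j = 0 \<or> LL n i \<le> j"
  by (auto simp: ww_def)

lemma ww_inj:
  assumes "n \<ge> 2" "0 < j" "j < LL n i" "0 < j'" "j' < LL n i'" "ww n i j = ww n i' j'"
  shows "i = i' \<and> j = j'"
proof -
  have M: "j < MM n" "j' < MM n" using LL_bounds[OF assms(1), of i] LL_bounds[OF assms(1), of i'] assms by auto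
  have e: "(i+1) * MM n + j = (i'+1) * MM n + j'" using assms by (simp add: ww_def)
  have "((i+1) * MM n + j) mod MM n = ((i'+1) * MM n + j') mod MM n" using e by (rule arg_cong)
  then have jj: "j = j'" using M by (metis mod_less mod_mult_self3)
  then show ?thesis using e by (simp add: MM_def)
qed

lemma ww_eq_iff:
  assumes "n \<ge> 2"
  shows "ww n i j = ww n i' j' \<longleftrightarrow> ((j = 0 \<or> LL n i \<le> j) \<and> (j' = 0 \<or> LL n i' \<le> j')) \<or>
     (i = i' \<and> j = j' \<and> 0 < j \<and> j < LL n i)"
  using ww_inj[OF assms, of j i j' i'] ww_zero[of n i j] ww_zero[of n i' j'] by auto

lemma mem_ed: "x \<in> ed n i j \<longleftrightarrow> x = ww n i j \<or> x = ww n i (Suc j)"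
  by (simp add: ed_def)

lemma ed_inj:
  assumes "n \<ge> 2" "j < LL n i" "j' < LL n i'" "ed n i j = ed n i' j'"
  shows "i = i' \<and> j = j'"
  using assms LL_bounds[OF assms(1), of i] LL_bounds[OF assms(1), of i']
  unfolding ed_def doubleton_eq_iff ww_eq_iff[OF assms(1)]
  by auto

lemma inc_inner:
  assumes "n \<ge> 2" "i < Suc n" "0 < j" "j < LL n i"
  shows "{p \<in> II n. ww n i j \<in> ed n (fst p) (snd p)} = {(i, j - 1), (i, j)}"
  using assms LL_bounds[OF assms(1), of i]
  unfolding mem_ed ww_eq_iff[OF assms(1)] II_def
  by auto

lemma inc_center:
  assumes "n \<ge> 2"
  shows "{p \<in> II n. 0 \<in> ed n (fst p) (snd p)} = (\<lambda>i. (i, 0)) ` {..<Suc n} \<union> (\<lambda>i. (i, LL n i - 1)) ` {..<Suc n}"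
proof (intro set_eqI iffI)
  fix p assume "p \<in> {p \<in> II n. 0 \<in> ed n (fst p) (snd p)}"
  then obtain i j where p: "p = (i,j)" "i < Suc n" "j < LL n i" "j = 0 \<or> LL n i \<le> Suc j"
    unfolding II_def mem_ed by (auto simp: ww_zero)
  then have "j = 0 \<or> j = LL n i - 1" by auto
  then show "p \<in> (\<lambda>i. (i, 0)) ` {..<Suc n} \<union> (\<lambda>i. (i, LL n i - 1)) ` {..<Suc n}"
    using p by auto
next
  fix p assume "p \<in> (\<lambda>i. (i, 0)) ` {..<Suc n} \<union> (\<lambda>i. (i, LL n i - 1)) ` {..<Suc n}"
  then obtain i j where p: "p = (i,j)" "i < Suc n" "j = 0 \<or> j = LL n i - 1" by auto
  have L: "4 \<le> LL n i" using LL_bounds[OF assms] by blast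
  then have "j < LL n i" "j = 0 \<or> LL n i \<le> Suc j" using p by auto
  then show "p \<in> {p \<in> II n. 0 \<in> ed n (fst p) (snd p)}"
    using p unfolding II_def mem_ed by (auto simp: ww_zero)
qed

definition lab :: "nat \<Rightarrow> nat \<Rightarrow> nat \<Rightarrow> nat" where
  "lab n i j = (if i < n then (if even j then (j div 2)*(2*n+1) + (i+1) else (2*n - j div 2)*(2*n+1) + (2*n - i))
     else (if even j then (j div 2 + 1)*(2*n+1) else (2*n - j div 2)*(2*n+1)))"

definition dec :: "nat \<Rightarrow> nat \<Rightarrow> nat \<times> nat" where
  "dec n v = (let R = v mod (2*n+1); Q = v div (2*n+1) in
     if R = 0 then (if Q \<le> n then (n, 2*(Q-1)) else (n, 2*(2*n-Q)+1))
     else if R \<le> n then (R-1, 2*Q) else (2*n - R, 2*(2*n - Q)+1))"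

lemma dm: "a < (d::nat) \<Longrightarrow> (t*d + a) mod d = a \<and> (t*d + a) div d = t"
  by simp

lemma lab_dec:
  assumes "n \<ge> 2" "i < Suc n" "j < LL n i"
  shows "dec n (lab n i j) = (i, j)"
proof -
  define t where "t = j div 2"
  have jt: "j = 2*t \<or> j = 2*t+1" unfolding t_def by auto
  show ?thesis
  proof (cases "i < n")
    case True
    then have tb: "t \<le> 2*n" using assms(3) by (auto simp: LL_def t_def)
    show ?thesis
    proof (cases "even j")
      case True
      have v: "lab n i j = t*(2*n+1) + (i+1)" using `i<n` True by (simp add: lab_def t_def)
      have "i + 1 < 2*n+1" using `i<n` by simp
      from dm[OF this, of t] have "lab n i j mod (2*n+1) = i+1" "lab n i j div (2*n+1) = t" using v by auto
      then show ?thesis using True `i<n` jt by (auto simp: dec_def Let_def)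
    next
      case False
      have v: "lab n i j = (2*n - t)*(2*n+1) + (2*n - i)" using `i<n` False by (simp add: lab_def t_def)
      have "2*n - i < 2*n+1" by simp
      from dm[OF this, of "2*n-t"] have "lab n i j mod (2*n+1) = 2*n - i" "lab n i j div (2*n+1) = 2*n - t" using v by auto
      then show ?thesis using False `i<n` jt tb by (auto simp: dec_def Let_def)
    qed
  next
    case False
    then have iN: "i = n" using assms(2) by simp
    then have tb: "t < n" using assms(3) by (auto simp: LL_def t_def)
    show ?thesis
    proof (cases "even j")
      case True
      have v: "lab n i j = (t+1)*(2*n+1) + 0" using iN True by (simp add: lab_def t_def)
      from dm[of 0 "2*n+1" "t+1"] have "lab n i j mod (2*n+1) = 0" "lab n i j div (2*n+1) = t+1" using v by auto
      then show ?thesis using True iN jt tb by (auto simp: dec_def Let_def)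
    next
      case False
      have v: "lab n i j = (2*n - t)*(2*n+1) + 0" using iN False by (simp add: lab_def t_def)
      from dm[of 0 "2*n+1" "2*n-t"] have "lab n i j mod (2*n+1) = 0" "lab n i j div (2*n+1) = 2*n - t" using v by auto
      then show ?thesis using False iN jt tb by (auto simp: dec_def Let_def)
    qed
  qed
qed

lemma lab_range:
  assumes "n \<ge> 2" "i < Suc n" "j < LL n i"
  shows "1 \<le> lab n i j \<and> lab n i j \<le> 4*n*n + 4*n"
proof -
  define t where "t = j div 2"
  have d1: "1 \<le> 2*n+1" by simp
  show ?thesis
  proof (cases "i < n")
    case True
    then have tb: "t \<le> 2*n" using assms(3) by (auto simp: LL_def t_def)
    have a: "t*(2*n+1) \<le> 2*n*(2*n+1)" using tb by (intro mult_le_mono1)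
    have b: "(2*n - t)*(2*n+1) \<le> 2*n*(2*n+1)" by (intro mult_le_mono1) simp
    show ?thesis using True a b by (auto simp: lab_def t_def[symmetric] algebra_simps)
  next
    case False
    then have iN: "i = n" using assms(2) by simp
    then have tb: "t < n" using assms(3) by (auto simp: LL_def t_def)
    have a: "(t+1)*(2*n+1) \<le> 2*n*(2*n+1)" using tb by (intro mult_le_mono1) simp
    have b: "(2*n - t)*(2*n+1) \<le> 2*n*(2*n+1)" by (intro mult_le_mono1) simp
    have c: "1 \<le> (2*n - t)*(2*n+1)" using tb by simp
    show ?thesis using iN a b c by (auto simp: lab_def t_def[symmetric] algebra_simps)
  qed
qed

lemma card_II: "n \<ge> 2 \<Longrightarrow> card (II n) = 4*n*n + 4*n"
proof -
  assume n: "n \<ge> 2"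
  have "II n = Sigma {..<Suc n} (\<lambda>i. {..<LL n i})" by (auto simp: II_def)
  then have "card (II n) = (\<Sum>i<Suc n. LL n i)" by (simp add: card_SigmaI)
  also have "\<dots> = (\<Sum>i<n. 4*n+2) + 2*n" by (simp add: LL_def)
  also have "\<dots> = 4*n*n + 4*n" by (simp add: algebra_simps)
  finally show ?thesis .
qed

lemma finite_II: "finite (II n)"
  by (rule finite_subset[of _ "{..<Suc n} \<times> {..<4*n+3}"]) (auto simp: II_def LL_def split: if_splits)

lemma lab_bij:
  assumes "n \<ge> 2"
  shows "bij_betw (\<lambda>(i,j). lab n i j) (II n) {1..4*n*n + 4*n}"
proof -
  have inj: "inj_on (\<lambda>(i,j). lab n i j) (II n)"
  proof (rule inj_on_inverseI[where g = "dec n"])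
    fix p assume "p \<in> II n" then show "dec n (case p of (i,j) \<Rightarrow> lab n i j) = p"
      using lab_dec[OF assms] by (auto simp: II_def)
  qed
  have sub: "(\<lambda>(i,j). lab n i j) ` II n \<subseteq> {1..4*n*n + 4*n}"
    using lab_range[OF assms] by (auto simp: II_def)
  have "card ((\<lambda>(i,j). lab n i j) ` II n) = card {1..4*n*n + 4*n}"
    using card_image[OF inj] card_II[OF assms] by simp
  then have "(\<lambda>(i,j). lab n i j) ` II n = {1..4*n*n + 4*n}"
    using sub by (intro card_subset_eq) auto
  then show ?thesis using inj by (simp add: bij_betw_def)
qed



lemma lab_odd_sum:
  assumes "i < Suc n" "2*t+1 < LL n i"
  shows "lab n i (2*t) + lab n i (2*t+1) = (2*n+1)*(2*n+1)"
proof (cases "i < n")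
  case True
  then have tb: "t \<le> 2*n" using assms by (auto simp: LL_def)
  have e1: "(2*n - t)*(2*n+1) = 2*n*(2*n+1) - t*(2*n+1)" by (rule diff_mult_distrib)
  have e2: "t*(2*n+1) \<le> 2*n*(2*n+1)" using tb by (intro mult_le_mono1)
  have e3: "(2*n+1)*(2*n+1) = 2*n*(2*n+1) + (2*n+1)" by simp
  have l: "lab n i (2*t) + lab n i (2*t+1) = t*(2*n+1) + (i+1) + ((2*n - t)*(2*n+1) + (2*n - i))"
    using True by (simp add: lab_def)
  show ?thesis unfolding l e1 e3 using e2 True by linarith
next
  case False
  then have iN: "i = n" using assms by simp
  then have tb: "t < n" using assms by (auto simp: LL_def)
  have e1: "(2*n - t)*(2*n+1) = 2*n*(2*n+1) - t*(2*n+1)" by (rule diff_mult_distrib)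
  have e2: "t*(2*n+1) \<le> 2*n*(2*n+1)" using tb by (intro mult_le_mono1) simp
  have e3: "(2*n+1)*(2*n+1) = 2*n*(2*n+1) + (2*n+1)" by simp
  have e4: "(t+1)*(2*n+1) = t*(2*n+1) + (2*n+1)" by simp
  have l: "lab n i (2*t) + lab n i (2*t+1) = (t+1)*(2*n+1) + (2*n - t)*(2*n+1)"
    using iN by (simp add: lab_def)
  show ?thesis unfolding l e1 e3 e4 using e2 by linarith
qed

lemma lab_even_sum:
  assumes "i < Suc n" "2*t+2 < LL n i"
  shows "lab n i (2*t+1) + lab n i (2*t+2) = (2*n+1)*(2*n+1) + (2*n+1)"
proof (cases "i < n")
  case True
  then have tb: "t \<le> 2*n" using assms by (auto simp: LL_def)
  have e1: "(2*n - t)*(2*n+1) = 2*n*(2*n+1) - t*(2*n+1)" by (rule diff_mult_distrib)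
  have e2: "t*(2*n+1) \<le> 2*n*(2*n+1)" using tb by (intro mult_le_mono1)
  have e3: "(2*n+1)*(2*n+1) = 2*n*(2*n+1) + (2*n+1)" by simp
  have e4: "(t+1)*(2*n+1) = t*(2*n+1) + (2*n+1)" by simp
  have l: "lab n i (2*t+1) + lab n i (2*t+2) = ((2*n - t)*(2*n+1) + (2*n - i)) + ((t+1)*(2*n+1) + (i+1))"
  proof -
    have "(2*t+2) div 2 = t+1" by simp
    then show ?thesis using True by (simp add: lab_def)
  qed
  show ?thesis unfolding l e1 e3 e4 using e2 True by linarith
next
  case False
  then have iN: "i = n" using assms by simp
  then have tb: "t < n" using assms by (auto simp: LL_def)
  have e1: "(2*n - t)*(2*n+1) = 2*n*(2*n+1) - t*(2*n+1)" by (rule diff_mult_distrib)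
  have e2: "t*(2*n+1) \<le> 2*n*(2*n+1)" using tb by (intro mult_le_mono1) simp
  have e3: "(2*n+1)*(2*n+1) = 2*n*(2*n+1) + (2*n+1)" by simp
  have e4: "(t+2)*(2*n+1) = t*(2*n+1) + 2*(2*n+1)" by simp
  have l: "lab n i (2*t+1) + lab n i (2*t+2) = (2*n - t)*(2*n+1) + (t+2)*(2*n+1)"
  proof -
    have "(2*t+2) div 2 = t+1" by simp
    then show ?thesis using iN by (simp add: lab_def)
  qed
  have g: "\<And>A B c. (B::nat) \<le> A \<Longrightarrow> A - B + (B + c) = A + c" by simp
  show ?thesis unfolding l e1 e3 e4 using g[OF e2, of "2*(2*n+1)"] by simp
qed

lemma lab_center_sum:
  assumes "n \<ge> 2"
  shows "(\<Sum>i<Suc n. lab n i 0 + lab n i (LL n i - 1)) = (2*n+1)*(2*n+1) + (2*n+1)"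
proof -
  have big: "lab n i 0 + lab n i (LL n i - 1) = 2*n+1" if "i < n" for i
  proof -
    have "LL n i - 1 = 2*(2*n) + 1" using that by (simp add: LL_def)
    moreover have "(2*(2*n)+1) div 2 = 2*n" by simp
    ultimately show ?thesis using that by (simp add: lab_def)
  qed
  have sm: "lab n n 0 + lab n n (LL n n - 1) = (n+2)*(2*n+1)"
  proof -
    have "LL n n - 1 = 2*(n-1) + 1" using assms by (simp add: LL_def)
    moreover have "(2*(n-1)+1) div 2 = n-1" by simp
    moreover have "2*n - (n-1) = n+1" using assms by simp
    ultimately show ?thesis by (simp add: lab_def)
  qed
  have "(\<Sum>i<Suc n. lab n i 0 + lab n i (LL n i - 1)) = (\<Sum>i<n. 2*n+1) + (n+2)*(2*n+1)"
    using big sm by simp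
  also have "\<dots> = (2*n+1)*(2*n+1) + (2*n+1)" by (simp add: algebra_simps)
  finally show ?thesis .
qed



definition ed' :: "nat \<Rightarrow> nat \<times> nat \<Rightarrow> nat set" where "ed' n = (\<lambda>(i,j). ed n i j)"
definition lab' :: "nat \<Rightarrow> nat \<times> nat \<Rightarrow> nat" where "lab' n = (\<lambda>(i,j). lab n i j)"
definition VV :: "nat \<Rightarrow> nat set" where "VV n = (\<lambda>(i,j). ww n i j) ` II n"
definition EE :: "nat \<Rightarrow> nat set set" where "EE n = ed' n ` II n"
definition ff :: "nat \<Rightarrow> nat set \<Rightarrow> nat" where "ff n e = lab' n (inv_into (II n) (ed' n) e)"

lemma inj_ed': "n \<ge> 2 \<Longrightarrow> inj_on (ed' n) (II n)"
  unfolding inj_on_def ed'_def II_def using ed_inj by fastforce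

lemma card_EE: "n \<ge> 2 \<Longrightarrow> card (EE n) = 4*n*n + 4*n"
  unfolding EE_def using card_image[OF inj_ed'] card_II by simp

lemma ff_ed: "n \<ge> 2 \<Longrightarrow> p \<in> II n \<Longrightarrow> ff n (ed' n p) = lab' n p"
  unfolding ff_def using inv_into_f_f[OF inj_ed'] by simp

lemma ff_bij: "n \<ge> 2 \<Longrightarrow> bij_betw (ff n) (EE n) {1..card (EE n)}"
proof -
  assume n: "n \<ge> 2"
  have b1: "bij_betw (inv_into (II n) (ed' n)) (EE n) (II n)"
    unfolding EE_def by (rule bij_betw_inv_into) (simp add: bij_betw_def inj_ed'[OF n])
  have b2: "bij_betw (lab' n) (II n) {1..card (EE n)}"
    using lab_bij[OF n] card_EE[OF n] by (simp add: lab'_def)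
  have "bij_betw (lab' n \<circ> inv_into (II n) (ed' n)) (EE n) {1..card (EE n)}"
    by (rule bij_betw_trans[OF b1 b2])
  moreover have "ff n = lab' n \<circ> inv_into (II n) (ed' n)" by (rule ext) (simp add: ff_def)
  ultimately show ?thesis by simp
qed

lemma vsum_eq:
  assumes n: "n \<ge> 2"
  shows "vsum (ff n) (EE n) x = (\<Sum>p\<in>{p \<in> II n. x \<in> ed n (fst p) (snd p)}. lab' n p)"
proof -
  let ?S = "{p \<in> II n. x \<in> ed n (fst p) (snd p)}"
  have e: "{e \<in> EE n. x \<in> e} = ed' n ` ?S"
    unfolding EE_def ed'_def by auto
  have inj: "inj_on (ed' n) ?S" using inj_ed'[OF n] by (rule inj_on_subset) auto
  have "vsum (ff n) (EE n) x = sum (ff n) (ed' n ` ?S)" unfolding vsum_def e ..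
  also have "\<dots> = sum (ff n \<circ> ed' n) ?S" by (rule sum.reindex[OF inj])
  also have "\<dots> = sum (lab' n) ?S" by (rule sum.cong) (auto simp: ff_ed[OF n])
  finally show ?thesis .
qed

lemma vsum_inner:
  assumes n: "n \<ge> 2" and "i < Suc n" "0 < j" "j < LL n i"
  shows "vsum (ff n) (EE n) (ww n i j) = lab n i (j - 1) + lab n i j"
  using assms unfolding vsum_eq[OF n] inc_inner[OF assms] by (simp add: lab'_def)

lemma vsum_center:
  assumes n: "n \<ge> 2"
  shows "vsum (ff n) (EE n) 0 = (2*n+1)*(2*n+1) + (2*n+1)"
proof -
  have L: "\<And>i. 4 \<le> LL n i" using LL_bounds[OF n] by blast
  have d: "(\<lambda>i. (i, 0)) ` {..<Suc n} \<inter> (\<lambda>i. (i, LL n i - 1)) ` {..<Suc n} = {}"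
  proof -
    have "LL n i - 1 \<noteq> 0" for i using L[of i] by simp
    then show ?thesis by auto
  qed
  have "vsum (ff n) (EE n) 0 = sum (lab' n) ((\<lambda>i. (i, 0)) ` {..<Suc n}) + sum (lab' n) ((\<lambda>i. (i, LL n i - 1)) ` {..<Suc n})"
    unfolding vsum_eq[OF n] inc_center[OF n] by (rule sum.union_disjoint) (use d in auto)
  also have "\<dots> = (\<Sum>i<Suc n. lab n i 0) + (\<Sum>i<Suc n. lab n i (LL n i - 1))"
    by (subst sum.reindex, simp add: inj_on_def, subst sum.reindex, simp add: inj_on_def, simp add: lab'_def)
  also have "\<dots> = (\<Sum>i<Suc n. lab n i 0 + lab n i (LL n i - 1))" by (simp add: sum.distrib)
  also have "\<dots> = (2*n+1)*(2*n+1) + (2*n+1)" by (rule lab_center_sum[OF n])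
  finally show ?thesis .
qed

lemma vsum_ww:
  assumes n: "n \<ge> 2" and i: "i < Suc n" and j: "j \<le> LL n i"
  shows "vsum (ff n) (EE n) (ww n i j) = (if odd j then (2*n+1)*(2*n+1) else (2*n+1)*(2*n+1) + (2*n+1))"
proof (cases "j = 0 \<or> j = LL n i")
  case True
  then have "ww n i j = 0" by (auto simp: ww_zero)
  moreover have "even j" using True LL_bounds[OF n, of i] by auto
  ultimately show ?thesis using vsum_center[OF n] by simp
next
  case False
  then have j': "0 < j" "j < LL n i" using j by auto
  show ?thesis
  proof (cases "odd j")
    case True
    define t where "t = j div 2"
    have t: "j = 2*t+1" using True unfolding t_def by presburger
    then show ?thesis using vsum_inner[OF n i j'] lab_odd_sum[OF i, of t] j' by simp
  next
    case False
    define t where "t = j div 2 - 1"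
    have t: "j = 2*t+2" using False j' unfolding t_def by presburger
    then show ?thesis using vsum_inner[OF n i j'] lab_even_sum[OF i, of t] j' False by simp
  qed
qed

definition HV :: "nat \<Rightarrow> nat \<Rightarrow> nat set" where "HV n i = ww n i ` {..<LL n i}"
definition HE :: "nat \<Rightarrow> nat \<Rightarrow> nat set set" where "HE n i = ed n i ` {..<LL n i}"

lemma ww_ne_Suc: "n \<ge> 2 \<Longrightarrow> j < LL n i \<Longrightarrow> ww n i j \<noteq> ww n i (Suc j)"
  using LL_bounds[of n i] by (auto simp: ww_eq_iff)
lemma ww_Suc_in: "n \<ge> 2 \<Longrightarrow> j < LL n i \<Longrightarrow> ww n i (Suc j) \<in> ww n i ` {..<LL n i}"
proof -
  assume n: "n \<ge> 2" and j: "j < LL n i"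
  show ?thesis
  proof (cases "Suc j < LL n i")
    case True then show ?thesis by auto
  next
    case False
    then have "ww n i (Suc j) = ww n i 0" by (simp add: ww_def)
    moreover have "0 < LL n i" using j by simp
    ultimately show ?thesis by blast
  qed
qed
lemma finite_VV: "finite (VV n)" unfolding VV_def using finite_II by simp
lemma simple_VV: "n \<ge> 2 \<Longrightarrow> simple_graph (VV n) (EE n)"
  unfolding simple_graph_def
proof (intro conjI ballI)
  assume n: "n \<ge> 2"
  show "finite (VV n)" by (rule finite_VV)
  fix e assume "e \<in> EE n"
  then obtain i j where ij: "i < Suc n" "j < LL n i" "e = ed n i j" by (auto simp: EE_def ed'_def II_def)
  have a: "ww n i j \<in> VV n" using ij by (force simp: VV_def II_def)
  have b: "ww n i (Suc j) \<in> VV n" using ww_Suc_in[OF n ij(2)] ij by (force simp: VV_def II_def)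
  show "\<exists>x y. x \<noteq> y \<and> x \<in> VV n \<and> y \<in> VV n \<and> e = {x, y}"
    using a b ww_ne_Suc[OF n ij(2)] ij by (auto simp: ed_def)
qed
lemma regular_HV:
  assumes n: "n \<ge> 2" and i: "i < Suc n"
  shows "regular_graph (HV n i) (HE n i)"
  unfolding regular_graph_def
proof (intro conjI)
  have L: "4 \<le> LL n i" using LL_bounds[OF n] by blast
  show "simple_graph (HV n i) (HE n i)"
    unfolding simple_graph_def HV_def HE_def
  proof (intro conjI ballI)
    show "finite (ww n i ` {..<LL n i})" by simp
    fix e assume "e \<in> ed n i ` {..<LL n i}"
    then obtain j where j: "j < LL n i" "e = ed n i j" by auto
    show "\<exists>x y. x \<noteq> y \<and> x \<in> ww n i ` {..<LL n i} \<and> y \<in> ww n i ` {..<LL n i} \<and> e = {x, y}"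
      by (rule exI[of _ "ww n i j"], rule exI[of _ "ww n i (Suc j)"])
         (use j ww_Suc_in[OF n j(1)] ww_ne_Suc[OF n j(1)] in \<open>auto simp: ed_def\<close>)
  qed
  have inj: "inj_on (ed n i) {..<LL n i}" using ed_inj[OF n] by (auto simp: inj_on_def)
  have "degree (HE n i) x = 2" if x: "x \<in> HV n i" for x
  proof -
    obtain j where j: "j < LL n i" "x = ww n i j" using x by (auto simp: HV_def)
    have S: "{e \<in> HE n i. x \<in> e} = ed n i ` {j' \<in> {..<LL n i}. x \<in> ed n i j'}"
      by (auto simp: HE_def)
    show ?thesis
    proof (cases "j = 0")
      case True
      then have x0: "x = 0" using j by (simp add: ww_def)
      have "{j' \<in> {..<LL n i}. x \<in> ed n i j'} = {0, LL n i - 1}"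
        using L unfolding x0 mem_ed by (auto simp: ww_zero)
      moreover have "card (ed n i ` {0, LL n i - 1}) = card {0, LL n i - 1}"
        by (rule card_image[OF inj_on_subset[OF inj]]) (use L j in auto)
      moreover have "card {0, LL n i - 1} = 2" using L j by auto
      ultimately show ?thesis unfolding degree_def S by simp
    next
      case False
      have "{j' \<in> {..<LL n i}. ww n i j \<in> ed n i j'} = {j - 1, j}"
        using L j False unfolding mem_ed ww_eq_iff[OF n] by auto
      moreover have "card (ed n i ` {j - 1, j}) = card {j - 1, j}"
        by (rule card_image[OF inj_on_subset[OF inj]]) (use L j in auto)
      moreover have "card {j - 1, j} = 2" using False by auto
      ultimately show ?thesis unfolding degree_def j(2) S[unfolded j(2)] by simp
    qed
  qed
  then show "\<exists>k. \<forall>x\<in>HV n i. degree (HE n i) x = k" by blast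
qed
lemma reach_ww:
  assumes n: "n \<ge> 2" and i: "i < Suc n"
  shows "j \<le> LL n i \<Longrightarrow> (\<lambda>a b. {a, b} \<in> EE n)\<^sup>*\<^sup>* 0 (ww n i j)"
proof (induction j)
  case 0 then show ?case by (simp add: ww_def)
next
  case (Suc j)
  then have "(\<lambda>a b. {a, b} \<in> EE n)\<^sup>*\<^sup>* 0 (ww n i j)" by simp
  moreover have "{ww n i j, ww n i (Suc j)} \<in> EE n"
    using Suc.prems i unfolding EE_def ed'_def II_def ed_def by force
  ultimately show ?case by (rule rtranclp.rtrancl_into_rtrancl)
qed
lemma reach_sym:
  assumes "(\<lambda>a b. {a, b} \<in> E)\<^sup>*\<^sup>* x y" shows "(\<lambda>a b. {a, b} \<in> E)\<^sup>*\<^sup>* y x"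
  using assms
proof (induction rule: rtranclp_induct)
  case base then show ?case by simp
next
  case (step y z)
  then have "{z, y} \<in> E" by (simp add: insert_commute)
  then show ?case using step(3) by (rule converse_rtranclp_into_rtranclp)
qed
lemma connected_VV: "n \<ge> 2 \<Longrightarrow> connected_graph (VV n) (EE n)"
  unfolding connected_graph_def
proof (intro conjI ballI)
  assume n: "n \<ge> 2"
  have z: "(0, 0) \<in> II n" using LL_bounds[OF n, of 0] by (simp add: II_def)
  then show "VV n \<noteq> {}" by (auto simp: VV_def)
  have r: "(\<lambda>a b. {a, b} \<in> EE n)\<^sup>*\<^sup>* 0 x" if "x \<in> VV n" for x
    using that reach_ww[OF n] by (auto simp: VV_def II_def)
  fix x y assume "x \<in> VV n" "y \<in> VV n"
  then show "(\<lambda>a b. {a, b} \<in> EE n)\<^sup>*\<^sup>* x y"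
    using rtranclp_trans[OF reach_sym[OF r[of x]] r[of y]] by simp
qed
lemma opu_VV: "n \<ge> 2 \<Longrightarrow> one_point_union_of_regular (VV n) (EE n)"
  unfolding one_point_union_of_regular_def
proof (intro exI conjI allI impI)
  assume n: "n \<ge> 2"
  show "2 \<le> Suc n" using n by simp
  fix i assume i: "i < Suc n"
  have L: "4 \<le> LL n i" using LL_bounds[OF n] by blast
  show "regular_graph (HV n i) (HE n i)" by (rule regular_HV[OF n i])
  show "HE n i \<noteq> {}" using L by (simp add: HE_def lessThan_empty_iff)
  show "0 \<in> HV n i" using L unfolding HV_def by (force simp: ww_def)
next
  assume n: "n \<ge> 2"
  fix i j assume i: "i < Suc n" and j: "j < Suc n" and ij: "i \<noteq> j"
  have "0 \<in> HV n i" "0 \<in> HV n j" using LL_bounds[OF n, of i] LL_bounds[OF n, of j]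
    unfolding HV_def by (force simp: ww_def)+
  moreover have "x = 0" if hx: "x \<in> HV n i" "x \<in> HV n j" for x
  proof -
    obtain a where a: "x = ww n i a" using hx(1) unfolding HV_def by blast
    obtain b where b: "x = ww n j b" using hx(2) unfolding HV_def by blast
    note ab = a b
    then have "ww n i a = ww n j b" by simp
    then have "a = 0 \<or> LL n i \<le> a" using ij unfolding ww_eq_iff[OF n] by auto
    then show ?thesis using ab(1) by (simp add: ww_zero)
  qed
  ultimately show "HV n i \<inter> HV n j = {0}" by blast
next
  show "VV n = (\<Union>i<Suc n. HV n i)" by (auto simp: VV_def HV_def II_def)
  show "EE n = (\<Union>i<Suc n. HE n i)" by (auto simp: EE_def ed'_def HE_def II_def)
qed
lemma card_VV: "n \<ge> 2 \<Longrightarrow> 4*n+1 \<le> card (VV n)"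
proof -
  assume n: "n \<ge> 2"
  have sub: "ww n 0 ` {1..<LL n 0} \<subseteq> VV n" by (force simp: VV_def II_def)
  have inj: "inj_on (ww n 0) {1..<LL n 0}" using ww_inj[OF n] by (auto simp: inj_on_def)
  have "card (ww n 0 ` {1..<LL n 0}) = 4*n+1" using card_image[OF inj] n by (simp add: LL_def)
  then show ?thesis using card_mono[OF finite_VV sub] by simp
qed

lemma lal_ff: "n \<ge> 2 \<Longrightarrow> local_antimagic_labeling (VV n) (EE n) (ff n)"
  unfolding local_antimagic_labeling_def
proof (intro conjI ballI impI)
  assume n: "n \<ge> 2"
  show "bij_betw (ff n) (EE n) {1..card (EE n)}" by (rule ff_bij[OF n])
  fix x y assume "x \<in> VV n" "y \<in> VV n" "{x, y} \<in> EE n"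
  then obtain i j where ij: "i < Suc n" "j < LL n i" "{x, y} = {ww n i j, ww n i (Suc j)}"
    by (auto simp: EE_def ed'_def ed_def II_def)
  have a: "vsum (ff n) (EE n) (ww n i j) \<noteq> vsum (ff n) (EE n) (ww n i (Suc j))"
    using vsum_ww[OF n ij(1), of j] vsum_ww[OF n ij(1), of "Suc j"] ij(2) by simp
  from ij(3) have "(x = ww n i j \<and> y = ww n i (Suc j)) \<or> (x = ww n i (Suc j) \<and> y = ww n i j)"
    by (auto simp: doubleton_eq_iff)
  then show "vsum (ff n) (EE n) x \<noteq> vsum (ff n) (EE n) y" using a by auto
qed

lemma ww_in_VV: "i < Suc n \<Longrightarrow> j < LL n i \<Longrightarrow> ww n i j \<in> VV n"
  unfolding VV_def II_def by (rule image_eqI[where x="(i,j)"]) auto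

lemma VV_elem: "v \<in> VV n \<Longrightarrow> \<exists>i j. i < Suc n \<and> j < LL n i \<and> v = ww n i j"
  unfolding VV_def II_def by auto

lemma image_ff: "n \<ge> 2 \<Longrightarrow> vsum (ff n) (EE n) ` VV n = {(2*n+1)*(2*n+1), (2*n+1)*(2*n+1) + (2*n+1)}"
proof -
  assume n: "n \<ge> 2"
  have L: "4 \<le> LL n 0" using LL_bounds[OF n] by blast
  have "vsum (ff n) (EE n) ` VV n \<subseteq> {(2*n+1)*(2*n+1), (2*n+1)*(2*n+1) + (2*n+1)}"
  proof
    fix v assume "v \<in> vsum (ff n) (EE n) ` VV n"
    then obtain x where x: "x \<in> VV n" "v = vsum (ff n) (EE n) x" by blast
    obtain i j where "i < Suc n" "j < LL n i" "x = ww n i j" using VV_elem[OF x(1)] by blast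
    then show "v \<in> {(2*n+1)*(2*n+1), (2*n+1)*(2*n+1) + (2*n+1)}"
      using vsum_ww[OF n, of i j] x(2) by simp
  qed
  moreover have "(2*n+1)*(2*n+1) \<in> vsum (ff n) (EE n) ` VV n"
  proof -
    have "ww n 0 1 \<in> VV n" using L by (auto intro!: ww_in_VV)
    then have "vsum (ff n) (EE n) (ww n 0 1) \<in> vsum (ff n) (EE n) ` VV n" by (rule imageI)
    moreover have "vsum (ff n) (EE n) (ww n 0 1) = (2*n+1)*(2*n+1)"
      using vsum_ww[OF n, of 0 1] L by simp
    ultimately show ?thesis by simp
  qed
  moreover have "(2*n+1)*(2*n+1) + (2*n+1) \<in> vsum (ff n) (EE n) ` VV n"
  proof -
    have "ww n 0 0 \<in> VV n" using L by (auto intro!: ww_in_VV)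
    then have "vsum (ff n) (EE n) (ww n 0 0) \<in> vsum (ff n) (EE n) ` VV n" by (rule imageI)
    moreover have "vsum (ff n) (EE n) (ww n 0 0) = (2*n+1)*(2*n+1) + (2*n+1)"
      using vsum_ww[OF n, of 0 0] by simp
    ultimately show ?thesis by simp
  qed
  ultimately show ?thesis by (intro subset_antisym) simp_all
qed
lemma chi_VV: "n \<ge> 2 \<Longrightarrow> chi_la (VV n) (EE n) = 2"
  unfolding chi_la_def
proof (rule cInf_eq_minimum)
  assume n: "n \<ge> 2"
  have c2: "card (vsum (ff n) (EE n) ` VV n) = 2" unfolding image_ff[OF n] by simp
  show "2 \<in> {card (vsum f (EE n) ` VV n) |f. local_antimagic_labeling (VV n) (EE n) f}"
    by (rule CollectI, rule exI[of _ "ff n"]) (simp add: c2 lal_ff[OF n])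
  fix c assume "c \<in> {card (vsum f (EE n) ` VV n) |f. local_antimagic_labeling (VV n) (EE n) f}"
  then obtain f where f: "c = card (vsum f (EE n) ` VV n)" "local_antimagic_labeling (VV n) (EE n) f" by blast
  have L: "4 \<le> LL n 0" using LL_bounds[OF n] by blast
  have x: "ww n 0 0 \<in> VV n" "ww n 0 1 \<in> VV n" using L by (auto intro!: ww_in_VV)
  have e: "{ww n 0 0, ww n 0 1} \<in> EE n" unfolding EE_def
    by (rule image_eqI[where x="(0,0)"]) (use L in \<open>auto simp: ed'_def ed_def II_def\<close>)
  have ne: "vsum f (EE n) (ww n 0 0) \<noteq> vsum f (EE n) (ww n 0 1)"
    using f(2) x e unfolding local_antimagic_labeling_def by blast
  have "{vsum f (EE n) (ww n 0 0), vsum f (EE n) (ww n 0 1)} \<subseteq> vsum f (EE n) ` VV n" using x by auto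
  from card_mono[OF _ this] have "card {vsum f (EE n) (ww n 0 0), vsum f (EE n) (ww n 0 1)} \<le> c"
    using f(1) finite_VV by simp
  then show "2 \<le> c" using ne by simp
qed

theorem mainTheorem14:
  shows "\<forall>N::nat. \<exists>(V::nat set) (E::nat set set).
           card V \<ge> N \<and> simple_graph V E \<and> connected_graph V E \<and>
           one_point_union_of_regular V E \<and> chi_la V E = 2"
proof
  fix N :: nat
  let ?n = "N + 2"
  have n: "?n \<ge> 2" by simp
  have "card (VV ?n) \<ge> N" using card_VV[OF n] by simp
  then show "\<exists>(V::nat set) (E::nat set set).
           card V \<ge> N \<and> simple_graph V E \<and> connected_graph V E \<and>
           one_point_union_of_regular V E \<and> chi_la V E = 2"
    using simple_VV[OF n] connected_VV[OF n] opu_VV[OF n] chi_VV[OF n] by blast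
qed

end
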